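(* For all $x,y,z\in\mathbb{C}^{n\times r}$, $$\|x-y\|_2\|x+y\|_2\leq\|x-z\|_2\|x+z\|_2+\|z-y\|_2\|z+y\|_2.$$
   Context: $\|\cdot\|_2$ denotes the Frobenius norm. *)

theory Defs
  imports "HOL-Analysis.Analysis"
begin

definition frob_norm :: "complex ^ 'r ^ 'n \<Rightarrow> real" where
  "frob_norm A = sqrt (\<Sum>i\<in>UNIV. \<Sum>j\<in>UNIV. (cmod (A $ i $ j))\<^sup>2)"

end

theory Submission
  imports Defs
begin

definition refl_map :: "'a::real_inner \<Rightarrow> 'a \<Rightarrow> 'a" where
  "refl_map w t = t - (2 * (w \<bullet> t) / (w \<bullet> w)) *\<^sub>R w"

lemma refl_norm: "norm (refl_map w t) = norm t"
proof (cases "w = 0")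
  case True then show ?thesis by (simp add: refl_map_def)
next
  case False
  then have ww: "w \<bullet> w > 0" by simp
  have "(norm (refl_map w t))\<^sup>2 = (norm t)\<^sup>2"
    unfolding refl_map_def power2_norm_eq_inner using ww
    by (simp add: inner_simps inner_commute field_simps power2_eq_square)
  then show ?thesis by (simp add: power2_eq_iff_nonneg)
qed

lemma refl_diff: "(a - c) \<bullet> refl_map w (a + c) = a \<bullet> refl_map w a - c \<bullet> refl_map w c"
  unfolding refl_map_def by (simp add: inner_simps inner_commute algebra_simps add_divide_distrib diff_divide_distrib)

lemma refl_bound: "a \<bullet> refl_map w a - c \<bullet> refl_map w c \<le> norm (a - c) * norm (a + c)"
proof -
  have "(a - c) \<bullet> refl_map w (a + c) \<le> norm (a - c) * norm (refl_map w (a + c))"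
    by (rule norm_cauchy_schwarz)
  then show ?thesis using refl_diff refl_norm by metis
qed

lemma refl_hit:
  fixes e f :: "'a::real_inner"
  assumes "norm e = 1" "norm f = 1"
  shows "refl_map (e - f) e = f"
proof (cases "e = f")
  case True then show ?thesis by (simp add: refl_map_def)
next
  case False
  have ee: "e \<bullet> e = 1" "f \<bullet> f = 1" using assms by (simp_all add: norm_eq_1)
  have nz: "(e - f) \<bullet> (e - f) \<noteq> 0" using False by simp
  have eq2: "(e - f) \<bullet> (e - f) = 2 * ((e - f) \<bullet> e)"
    using ee by (simp add: inner_simps inner_commute)
  have c1: "2 * ((e - f) \<bullet> e) / ((e - f) \<bullet> (e - f)) = 1" using nz unfolding eq2[symmetric] by (rule divide_self)
  show ?thesis unfolding refl_map_def c1 by simp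
qed

lemma gen_ineq:
  fixes x y z :: "'a::real_inner"
  shows "norm (x - y) * norm (x + y) \<le> norm (x - z) * norm (x + z) + norm (z - y) * norm (z + y)"
proof (cases "x - y = 0 \<or> x + y = 0")
  case True then show ?thesis
    by (metis add_nonneg_nonneg mult_eq_0_iff norm_ge_zero norm_zero mult_nonneg_nonneg)
next
  case False
  define u where "u = x - y"
  define v where "v = x + y"
  have nu: "norm u > 0" "norm v > 0" using False u_def v_def by auto
  define e where "e = (1 / norm v) *\<^sub>R v"
  define f where "f = (1 / norm u) *\<^sub>R u"
  have "norm e = 1" "norm f = 1" using nu by (simp_all add: e_def f_def)
  then have hit: "refl_map (e - f) e = f" by (rule refl_hit)
  have lin: "refl_map w (r *\<^sub>R t) = r *\<^sub>R refl_map w t" for w t and r :: real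
    unfolding refl_map_def by (simp add: inner_simps algebra_simps)
  have "v = norm v *\<^sub>R e" using nu by (simp add: e_def)
  then have "refl_map (e - f) v = norm v *\<^sub>R f" using lin hit by metis
  then have "u \<bullet> refl_map (e - f) v = norm v * (u \<bullet> f)" by simp
  also have "u \<bullet> f = norm u" using nu by (simp add: f_def dot_square_norm power2_eq_square)
  finally have eq: "u \<bullet> refl_map (e - f) v = norm u * norm v" by simp
  let ?W = "refl_map (e - f)"
  have "norm (x - y) * norm (x + y) = (x \<bullet> ?W x - z \<bullet> ?W z) + (z \<bullet> ?W z - y \<bullet> ?W y)"
    using eq refl_diff[of x y "e - f"] u_def v_def by simp
  also have "\<dots> \<le> norm (x - z) * norm (x + z) + norm (z - y) * norm (z + y)"
    using refl_bound[of x "e - f" z] refl_bound[of z "e - f" y] by linarith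
  finally show ?thesis .
qed

lemma frob_eq: "frob_norm A = norm A"
  unfolding frob_norm_def norm_vec_def L2_set_def
  by (simp add: real_sqrt_pow2 sum_nonneg)

theorem lemmaA1:
  fixes x y z :: "complex ^ 'r ^ 'n"
  shows "frob_norm (x - y) * frob_norm (x + y)
           \<le> frob_norm (x - z) * frob_norm (x + z) + frob_norm (z - y) * frob_norm (z + y)"
  unfolding frob_eq by (rule gen_ineq)

end
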